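(* Let $\mathcal{H}$ be an LSH family on $\mathbb{R}^d$ (possibly of infinite range) with collision probability $k(x,y)=\Pr_{h\sim\mathcal{H}}[h(x)=h(y)]$, fix an integer $p\ge1$ and an integer $R\ge 2$. Let $h$ be the concatenation of $p$ independent draws from $\mathcal{H}$, let $g$ be a uniformly random function from the range of $h$ to $\{1,\dots,R\}$, independent of $h$, and set $\bar h=g\circ h$. Let $\mathcal{D}\subset\mathbb{R}^d$ with $N=|\mathcal{D}|$, and let $A$ be the array of $R$ counters with $A[j]=|\{x\in\mathcal{D}:\bar h(x)=j\}|$. For a query $q$ define $$\widehat K(q)=\left(\frac{A[\bar h(q)]}{N}-\frac1R\right)\frac{R}{R-1}.$$ Then $\mathbb{E}[\widehat K(q)]=K(q)$ and $$\operatorname{Var}(\widehat K(q))\le\left(\frac{R}{R-1}\right)^2\left(\sqrt{\frac{R-1}{R}}\,\widetilde K(q)+\frac{1}{\sqrt R}\right)^2 .$$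
   Context: Here $K(q)=\frac1N\sum_{x\in\mathcal{D}}k^p(x,q)$ and $\widetilde K(q)=\frac1N\sum_{x\in\mathcal{D}}k^{p/2}(x,q)$. Under this construction $\Pr[\bar h(x)=\bar h(q)]=k^p(x,q)\frac{R-1}{R}+\frac1R$. *)

theory Defs
  imports "HOL-Probability.Probability"
begin

definition lsh_family :: "('a \<Rightarrow> 'u) measure \<Rightarrow> bool" where
  "lsh_family H \<longleftrightarrow> prob_space H \<and>
     (\<forall>x y. {f \<in> space H. f x = f y} \<in> sets H)"

definition coll_prob :: "('a \<Rightarrow> 'u) measure \<Rightarrow> 'a \<Rightarrow> 'a \<Rightarrow> real" where
  "coll_prob H x y = measure H {f \<in> space H. f x = f y}"

definition concat_draws :: "('a \<Rightarrow> 'u) measure \<Rightarrow> nat \<Rightarrow> (nat \<Rightarrow> 'a \<Rightarrow> 'u) measure" where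
  "concat_draws H p = PiM {..<p} (\<lambda>_. H)"

definition concat_hash :: "nat \<Rightarrow> (nat \<Rightarrow> 'a \<Rightarrow> 'u) \<Rightarrow> 'a \<Rightarrow> 'u list" where
  "concat_hash p hs x = map (\<lambda>i. hs i x) [0..<p]"

definition rand_fun :: "nat \<Rightarrow> nat \<Rightarrow> ('u list \<Rightarrow> nat) measure" where
  "rand_fun p R = PiM {xs. length xs = p} (\<lambda>_. measure_pmf (pmf_of_set {1..R}))"

definition counters :: "('a \<Rightarrow> nat) \<Rightarrow> 'a set \<Rightarrow> nat \<Rightarrow> nat" where
  "counters hbar D j = card {x \<in> D. hbar x = j}"

definition K_hat :: "nat \<Rightarrow> ('a \<Rightarrow> nat) \<Rightarrow> 'a set \<Rightarrow> 'a \<Rightarrow> real" where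
  "K_hat R hbar D q =
     (real (counters hbar D (hbar q)) / real (card D) - 1 / real R) * (real R / (real R - 1))"

definition K_dens :: "('a \<Rightarrow> 'a \<Rightarrow> real) \<Rightarrow> nat \<Rightarrow> 'a set \<Rightarrow> 'a \<Rightarrow> real" where
  "K_dens k p D q = (1 / real (card D)) * (\<Sum>x\<in>D. k x q ^ p)"

definition K_tilde :: "('a \<Rightarrow> 'a \<Rightarrow> real) \<Rightarrow> nat \<Rightarrow> 'a set \<Rightarrow> 'a \<Rightarrow> real" where
  "K_tilde k p D q = (1 / real (card D)) * (\<Sum>x\<in>D. k x q powr (real p / 2))"

text \<open>Expectation over the independent pair (h, g): integrate over g for fixed h
  (g is independent of h), then over h.\<close>
definition E_hg :: "(nat \<Rightarrow> 'a \<Rightarrow> 'u) measure \<Rightarrow> ('u list \<Rightarrow> nat) measure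
     \<Rightarrow> ((nat \<Rightarrow> 'a \<Rightarrow> 'u) \<Rightarrow> ('u list \<Rightarrow> nat) \<Rightarrow> real) \<Rightarrow> real" where
  "E_hg Mh Mg X = (\<integral>hs. (\<integral>g. X hs g \<partial>Mg) \<partial>Mh)"

definition Var_hg :: "(nat \<Rightarrow> 'a \<Rightarrow> 'u) measure \<Rightarrow> ('u list \<Rightarrow> nat) measure
     \<Rightarrow> ((nat \<Rightarrow> 'a \<Rightarrow> 'u) \<Rightarrow> ('u list \<Rightarrow> nat) \<Rightarrow> real) \<Rightarrow> real" where
  "Var_hg Mh Mg X = E_hg Mh Mg (\<lambda>hs g. (X hs g - E_hg Mh Mg X)\<^sup>2)"

end

theory Submission
  imports Defs
begin

lemma g_meas:
  fixes I :: "'i set" and P :: "nat pmf"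
  assumes "u \<in> I" "w \<in> I"
  shows "(\<lambda>g. of_bool (g u = g w) :: real) \<in> borel_measurable (PiM I (\<lambda>_. measure_pmf P))"
  using assms by measurable

lemma g_pair:
  fixes I :: "'i set" and R :: nat
  assumes "u \<in> I" "w \<in> I" "R \<ge> 1"
  shows "(\<integral>g. of_bool (g u = g w) \<partial>(PiM I (\<lambda>_. measure_pmf (pmf_of_set {1..R})))) =
          (if u = w then 1 else 1 / real R)"
proof -
  define M where "M = PiM I (\<lambda>_. measure_pmf (pmf_of_set {1..R}))"
  interpret G: product_prob_space "\<lambda>_. measure_pmf (pmf_of_set {1..R})" I
    by unfold_locales
  have ne: "{1..R} \<noteq> {}" using assms by auto
  show ?thesis
  proof (cases "u = w")
    case True then show ?thesis using G.P.prob_space by simp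
  next
    case False
    have ae: "AE g in M. g u \<in> {1..R}"
    proof -
      have e1: "emeasure M {g\<in>space M. g u \<in> {1..R}} = 1"
        unfolding M_def using G.emeasure_PiM_Collect_single[of u "{1..R}"] assms ne
        by (simp add: measure_pmf.emeasure_eq_measure measure_pmf_of_set)
      have "G.prob {g\<in>space M. g u \<in> {1..R}} = 1"
        using e1 unfolding M_def G.P.emeasure_eq_measure by simp
      moreover have "{g\<in>space M. g u \<in> {1..R}} \<in> sets M" unfolding M_def using assms by (intro sets_Collect_single') auto
      ultimately have "AE g in M. g \<in> {g\<in>space M. g u \<in> {1..R}}"
        unfolding M_def by (subst G.prob_eq_1[symmetric]) auto
      then show ?thesis by auto
    qed
    have eq: "AE g in M. (of_bool (g u = g w) :: real) = (\<Sum>a\<in>{1..R}. of_bool (g u = a \<and> g w = a))"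
      using ae
    proof eventually_elim
      case (elim g)
      have "(\<Sum>a\<in>{1..R}. (of_bool (g u = a \<and> g w = a) :: real)) = (\<Sum>a\<in>{1..R}. if a = g u then of_bool (g u = g w) else 0)"
        by (rule sum.cong) auto
      also have "\<dots> = of_bool (g u = g w)" using elim by (simp add: sum.delta)
      finally show ?case by simp
    qed
    have int1: "integrable M (\<lambda>g. of_bool (g u = a \<and> g w = a) :: real)" for a
      unfolding M_def
      by (rule G.integrable_const_bound[where B=1]) (use assms in auto)
    have m: "(\<integral>g. of_bool (g u = a \<and> g w = a) \<partial>M) = 1 / real R ^ 2" if a: "a \<in> {1..R}" for a
    proof -
      have S: "{g\<in>space M. \<forall>i\<in>{u,w}. g i \<in> {a}} \<in> sets M"
        unfolding M_def using assms by (intro sets_Collect_single' sets.sets_Collect_finite_All) auto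
      have "(\<integral>g. of_bool (g u = a \<and> g w = a) \<partial>M) = (\<integral>g. indicator {g\<in>space M. \<forall>i\<in>{u,w}. g i \<in> {a}} g \<partial>M)"
        by (rule Bochner_Integration.integral_cong) (auto simp: indicator_def)
      also have "\<dots> = measure M {g\<in>space M. \<forall>i\<in>{u,w}. g i \<in> {a}}"
        using S unfolding M_def by (simp add: G.P.emeasure_eq_measure)
      also have "\<dots> = 1 / real R ^ 2"
      proof -
        have "emeasure M {g\<in>space M. \<forall>i\<in>{u,w}. g i \<in> {a}} = ennreal ((1 / real R) ^ 2)"
          unfolding M_def using G.emeasure_PiM_Collect[of "{u,w}" "\<lambda>_. {a}"] assms False a ne
          by (simp add: measure_pmf.emeasure_eq_measure measure_pmf_of_set ennreal_mult'[symmetric] power2_eq_square)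
        then show ?thesis unfolding M_def G.P.emeasure_eq_measure by (simp add: power_divide)
      qed
      finally show ?thesis .
    qed
    have "(\<integral>g. of_bool (g u = g w) \<partial>M) = (\<integral>g. (\<Sum>a\<in>{1..R}. of_bool (g u = a \<and> g w = a)) \<partial>M :: real)"
    proof (rule integral_cong_AE)
      show "(\<lambda>g. of_bool (g u = g w) :: real) \<in> borel_measurable M"
        using g_meas[OF assms(1,2)] by (simp add: M_def)
      show "(\<lambda>g. \<Sum>a\<in>{1..R}. of_bool (g u = a \<and> g w = a) :: real) \<in> borel_measurable M"
        using int1 by (intro borel_measurable_sum) auto
    qed (use eq in simp)
    also have "\<dots> = (\<Sum>a\<in>{1..R}. (\<integral>g. of_bool (g u = a \<and> g w = a) \<partial>M))"
      by (rule Bochner_Integration.integral_sum) (rule int1)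
    also have "\<dots> = (\<Sum>a\<in>{1..R}. 1 / real R ^ 2)"
      by (rule sum.cong) (auto simp: m)
    also have "\<dots> = 1 / real R" using assms by (simp add: power2_eq_square)
    finally show ?thesis using False by (simp add: M_def)
  qed
qed

lemma card_filter_real:
  assumes "finite D"
  shows "real (card {x\<in>D. P x}) = (\<Sum>x\<in>D. (of_bool (P x) :: real))"
proof -
  have "real (card {x\<in>D. P x}) = (\<Sum>x\<in>{x\<in>D. P x}. 1)" by simp
  also have "\<dots> = (\<Sum>x\<in>D. if P x then 1 else 0)" using assms by (rule sum.inter_filter)
  finally show ?thesis by (simp add: of_bool_def)
qed

locale LS =
  fixes H :: "('a \<Rightarrow> 'u) measure" and p R :: nat and D :: "'a set" and q :: 'a
  assumes lsh: "lsh_family H" and p1: "p \<ge> 1" and R2: "R \<ge> 2"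
    and fin: "finite D" and ne: "D \<noteq> {}"
begin

abbreviation "Mh \<equiv> concat_draws H p"
abbreviation "Mg \<equiv> rand_fun p R"
abbreviation "hh \<equiv> concat_hash p"
definition "E x = {hs \<in> space Mh. hh hs x = hh hs q}"
abbreviation "k x \<equiv> coll_prob H x q"

lemma H_prob: "prob_space H" using lsh by (simp add: lsh_family_def)
lemma H_sets: "{f \<in> space H. f x = f y} \<in> sets H" using lsh by (simp add: lsh_family_def)

lemma Mh_prob: "prob_space Mh"
  unfolding concat_draws_def by (rule prob_space_PiM) (rule H_prob)

lemma Mg_prob: "prob_space Mg"
  unfolding rand_fun_def by (rule prob_space_PiM) (rule prob_space_measure_pmf)

lemma hh_len[simp]: "length (hh hs x) = p" by (simp add: concat_hash_def)

lemma E_eq: "E x = {hs\<in>space Mh. \<forall>i\<in>{..<p}. hs i \<in> {f\<in>space H. f x = f q}}"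
  unfolding E_def concat_hash_def concat_draws_def
  by (auto simp: space_PiM PiE_iff map_eq_conv)

lemma E_sets: "E x \<in> sets Mh"
proof -
  interpret P: product_prob_space "\<lambda>_. H" "{..<p}" using H_prob by (simp add: product_prob_space_def product_prob_space_axioms_def product_sigma_finite_def prob_space_imp_sigma_finite)
  show ?thesis unfolding E_eq concat_draws_def
    using H_sets by (intro sets.sets_Collect_finite_All sets_Collect_single') auto
qed

lemma E_meas: "measure Mh (E x) = k x ^ p"
proof -
  interpret P: product_prob_space "\<lambda>_. H" "{..<p}" using H_prob by (simp add: product_prob_space_def product_prob_space_axioms_def product_sigma_finite_def prob_space_imp_sigma_finite)
  interpret Hp: prob_space H by (rule H_prob)
  have "emeasure Mh (E x) = (\<Prod>i\<in>{..<p}. emeasure H {f\<in>space H. f x = f q})"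
    unfolding E_eq concat_draws_def using H_sets by (intro P.emeasure_PiM_Collect) auto
  also have "\<dots> = ennreal (k x ^ p)"
    by (simp add: finite_measure.emeasure_eq_measure[OF prob_space.finite_measure[OF H_prob]] coll_prob_def prod_ennreal ennreal_power)
  finally show ?thesis unfolding concat_draws_def P.P.emeasure_eq_measure
    by (simp add: coll_prob_def)
qed

lemma k_nonneg: "0 \<le> k x" by (simp add: coll_prob_def)

lemma E2_le1: "measure Mh (E x \<inter> E y) \<le> k x ^ p"
proof -
  interpret Mp: prob_space Mh by (rule Mh_prob)
  show ?thesis using E_sets by (metis E_meas Int_lower1 Mp.finite_measure_mono)
qed

lemma E2_le2: "measure Mh (E x \<inter> E y) \<le> k y ^ p"
proof -
  interpret Mp: prob_space Mh by (rule Mh_prob)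
  show ?thesis using E_sets by (metis E_meas Int_lower2 Mp.finite_measure_mono)
qed


abbreviation "Y hs g x \<equiv> (of_bool (g (hh hs x) = g (hh hs q)) :: real)"

lemma Y_meas: "(\<lambda>g. Y hs g x) \<in> borel_measurable Mg"
  unfolding rand_fun_def by (rule g_meas) auto

lemma Y_int: "integrable Mg (\<lambda>g. Y hs g x)"
proof -
  interpret Gp: prob_space Mg by (rule Mg_prob)
  show ?thesis by (rule Gp.integrable_const_bound[where B=1]) (auto intro: Y_meas)
qed

lemma YY_int: "integrable Mg (\<lambda>g. Y hs g x * Y hs g y)"
proof -
  interpret Gp: prob_space Mg by (rule Mg_prob)
  show ?thesis by (rule Gp.integrable_const_bound[where B=1]) (auto intro!: borel_measurable_times Y_meas)
qed

lemma Y_exp: "(\<integral>g. Y hs g x \<partial>Mg) = (if hh hs x = hh hs q then 1 else 1 / real R)"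
  unfolding rand_fun_def using R2 by (intro g_pair) auto

lemma YY_le: "(\<integral>g. Y hs g x * Y hs g y \<partial>Mg) \<le>
   (if hh hs x = hh hs q \<and> hh hs y = hh hs q then 1 else 1 / real R)"
proof -
  interpret Gp: prob_space Mg by (rule Mg_prob)
  have le1: "(\<integral>g. Y hs g x * Y hs g y \<partial>Mg) \<le> (\<integral>g. Y hs g x \<partial>Mg)"
    by (intro Bochner_Integration.integral_mono YY_int Y_int) auto
  have le2: "(\<integral>g. Y hs g x * Y hs g y \<partial>Mg) \<le> (\<integral>g. Y hs g y \<partial>Mg)"
    by (intro Bochner_Integration.integral_mono YY_int Y_int) auto
  show ?thesis using le1 le2 R2 by (auto simp: Y_exp)
qed


definition "c1 = real R / (real R - 1)"
abbreviation "N \<equiv> real (card D)"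
abbreviation "Kc \<equiv> K_dens (coll_prob H) p D q"
definition "m = 1 / real R + (1 - 1 / real R) * Kc"
definition "f hs x = (if hh hs x = hh hs q then 1 else 1 / real R)"
definition "ff hs x y = (if hh hs x = hh hs q \<and> hh hs y = hh hs q then 1 else 1 / real R)"

lemma N_pos: "N > 0" using fin ne by (simp add: card_gt_0_iff)

lemma c1_prop: "c1 * (1 - 1 / real R) = 1"
  using R2 by (simp add: c1_def field_simps)

lemma X_eq: "K_hat R (g \<circ> hh hs) D q = c1 * ((\<Sum>x\<in>D. Y hs g x) / N - 1 / real R)"
  unfolding K_hat_def counters_def c1_def using card_filter_real[OF fin] by simp

lemma sq_eq: "(K_hat R (g \<circ> hh hs) D q - Kc)\<^sup>2 =
   c1\<^sup>2 * ((\<Sum>x\<in>D. \<Sum>y\<in>D. Y hs g x * Y hs g y) / N\<^sup>2 - 2 * m * (\<Sum>x\<in>D. Y hs g x) / N + m\<^sup>2)"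
proof -
  define S where "S = (\<Sum>x\<in>D. Y hs g x)"
  have cm0: "c1 * ((1 - 1 / real R) * Kc) = Kc" by (simp add: mult.assoc[symmetric] c1_prop)
  have cm: "c1 * m = c1 / real R + Kc" unfolding m_def by (simp add: distrib_left cm0)
  have e: "K_hat R (g \<circ> hh hs) D q - Kc = c1 * (S / N - m)"
    unfolding X_eq S_def using cm by (simp add: algebra_simps)
  have ss: "S * S = (\<Sum>x\<in>D. \<Sum>y\<in>D. Y hs g x * Y hs g y)"
    unfolding S_def by (rule sum_product)
  have "(S / N - m)\<^sup>2 = (S * S) / N\<^sup>2 - 2 * m * S / N + m\<^sup>2"
    using N_pos by (simp add: power2_eq_square field_simps)
  then show ?thesis unfolding ss[symmetric] S_def[symmetric] e power_mult_distrib by simp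
qed

lemma inner_var: "(\<integral>g. (K_hat R (g \<circ> hh hs) D q - Kc)\<^sup>2 \<partial>Mg) =
   c1\<^sup>2 * ((\<Sum>x\<in>D. \<Sum>y\<in>D. (\<integral>g. Y hs g x * Y hs g y \<partial>Mg)) / N\<^sup>2 - 2 * m * (\<Sum>x\<in>D. f hs x) / N + m\<^sup>2)"
proof -
  interpret Gp: prob_space Mg by (rule Mg_prob)
  have i1: "integrable Mg (\<lambda>g. (\<Sum>x\<in>D. \<Sum>y\<in>D. Y hs g x * Y hs g y) / N\<^sup>2)"
    by (intro integrable_divide Bochner_Integration.integrable_sum YY_int)
  have i2: "integrable Mg (\<lambda>g. 2 * m * (\<Sum>x\<in>D. Y hs g x) / N)"
    by (intro integrable_divide integrable_mult_right Bochner_Integration.integrable_sum Y_int)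
  have "(\<integral>g. (K_hat R (g \<circ> hh hs) D q - Kc)\<^sup>2 \<partial>Mg) =
     (\<integral>g. c1\<^sup>2 * ((\<Sum>x\<in>D. \<Sum>y\<in>D. Y hs g x * Y hs g y) / N\<^sup>2 - 2 * m * (\<Sum>x\<in>D. Y hs g x) / N + m\<^sup>2) \<partial>Mg)"
    by (rule Bochner_Integration.integral_cong) (auto simp: sq_eq)
  also have "\<dots> = c1\<^sup>2 * ((\<integral>g. (\<Sum>x\<in>D. \<Sum>y\<in>D. Y hs g x * Y hs g y) / N\<^sup>2 \<partial>Mg)
        - (\<integral>g. 2 * m * (\<Sum>x\<in>D. Y hs g x) / N \<partial>Mg) + m\<^sup>2)"
    using i1 i2 Gp.prob_space by (simp add: Bochner_Integration.integral_add Bochner_Integration.integral_diff Gp.prob_space)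
  also have "(\<integral>g. (\<Sum>x\<in>D. \<Sum>y\<in>D. Y hs g x * Y hs g y) / N\<^sup>2 \<partial>Mg) =
      (\<Sum>x\<in>D. \<Sum>y\<in>D. (\<integral>g. Y hs g x * Y hs g y \<partial>Mg)) / N\<^sup>2"
    by (simp add: Bochner_Integration.integral_sum YY_int Bochner_Integration.integrable_sum)
  also have "(\<integral>g. 2 * m * (\<Sum>x\<in>D. Y hs g x) / N \<partial>Mg) = 2 * m * (\<Sum>x\<in>D. f hs x) / N"
    by (simp add: Bochner_Integration.integral_sum Y_int Y_exp f_def)
  finally show ?thesis .
qed


abbreviation "s x \<equiv> k x powr (real p / 2)"

lemma s_sqrt: "s x = sqrt (k x ^ p)"
proof (cases "k x = 0")
  case True then show ?thesis using p1 by simp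
next
  case False
  then have kp: "k x > 0" using k_nonneg[of x] by simp
  have "k x powr (real p / 2) = (k x powr real p) powr (1/2)"
    by (simp add: powr_powr)
  also have "\<dots> = sqrt (k x powr real p)" by (simp add: powr_half_sqrt)
  also have "\<dots> = sqrt (k x ^ p)" using kp by (simp add: powr_realpow)
  finally show ?thesis .
qed

lemma s_nonneg: "0 \<le> s x" by simp

lemma E2_le_s: "measure Mh (E x \<inter> E y) \<le> s x * s y"
proof -
  let ?M = "measure Mh (E x \<inter> E y)"
  have "sqrt ?M \<le> s x" unfolding s_sqrt using E2_le1 by simp
  moreover have "sqrt ?M \<le> s y" unfolding s_sqrt using E2_le2 by simp
  ultimately have "sqrt ?M * sqrt ?M \<le> s x * s y"
    by (intro mult_mono) auto
  then show ?thesis by simp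
qed

lemma f_ind: "hs \<in> space Mh \<Longrightarrow> f hs x = 1 / real R + (1 - 1 / real R) * indicator (E x) hs"
  by (simp add: f_def E_def indicator_def)

lemma ff_ind: "hs \<in> space Mh \<Longrightarrow> ff hs x y = 1 / real R + (1 - 1 / real R) * indicator (E x \<inter> E y) hs"
  by (auto simp: ff_def E_def indicator_def)

lemma f_int: "integrable Mh (\<lambda>hs. f hs x)"
proof -
  interpret Mp: prob_space Mh by (rule Mh_prob)
  have "integrable Mh (\<lambda>hs. 1 / real R + (1 - 1 / real R) * indicator (E x) hs :: real)"
    using E_sets by (intro Bochner_Integration.integrable_add Mp.integrable_const integrable_mult_right integrable_real_indicator) (auto simp: Mp.emeasure_eq_measure)
  then show ?thesis by (rule Bochner_Integration.integrable_cong[THEN iffD1, rotated -1]) (auto simp: f_ind)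
qed

lemma ff_int: "integrable Mh (\<lambda>hs. ff hs x y)"
proof -
  interpret Mp: prob_space Mh by (rule Mh_prob)
  have "integrable Mh (\<lambda>hs. 1 / real R + (1 - 1 / real R) * indicator (E x \<inter> E y) hs :: real)"
    using E_sets by (intro Bochner_Integration.integrable_add Mp.integrable_const integrable_mult_right integrable_real_indicator) (auto simp: Mp.emeasure_eq_measure)
  then show ?thesis by (rule Bochner_Integration.integrable_cong[THEN iffD1, rotated -1]) (auto simp: ff_ind)
qed

lemma f_exp: "(\<integral>hs. f hs x \<partial>Mh) = 1 / real R + (1 - 1 / real R) * k x ^ p"
proof -
  interpret Mp: prob_space Mh by (rule Mh_prob)
  have "(\<integral>hs. f hs x \<partial>Mh) = (\<integral>hs. 1 / real R + (1 - 1 / real R) * indicator (E x) hs \<partial>Mh)"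
    by (rule Bochner_Integration.integral_cong) (auto simp: f_ind)
  also have "\<dots> = 1 / real R + (1 - 1 / real R) * measure Mh (E x)"
    using E_sets Mp.prob_space
    by (subst Bochner_Integration.integral_add) (auto simp: Mp.emeasure_eq_measure)
  finally show ?thesis by (simp add: E_meas)
qed

lemma ff_exp: "(\<integral>hs. ff hs x y \<partial>Mh) \<le> 1 / real R + (1 - 1 / real R) * (s x * s y)"
proof -
  interpret Mp: prob_space Mh by (rule Mh_prob)
  have "(\<integral>hs. ff hs x y \<partial>Mh) = (\<integral>hs. 1 / real R + (1 - 1 / real R) * indicator (E x \<inter> E y) hs \<partial>Mh)"
    by (rule Bochner_Integration.integral_cong) (auto simp: ff_ind)
  also have "\<dots> = 1 / real R + (1 - 1 / real R) * measure Mh (E x \<inter> E y)"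
    using E_sets Mp.prob_space
    by (subst Bochner_Integration.integral_add) (auto simp: Mp.emeasure_eq_measure)
  also have "\<dots> \<le> 1 / real R + (1 - 1 / real R) * (s x * s y)"
    using R2 E2_le_s[of x y] by (intro add_left_mono mult_left_mono) auto
  finally show ?thesis .
qed


lemma sum_f_exp: "(\<Sum>x\<in>D. (\<integral>hs. f hs x \<partial>Mh)) / N = m"
proof -
  have "(\<Sum>x\<in>D. (\<integral>hs. f hs x \<partial>Mh)) = N * (1 / real R) + (1 - 1 / real R) * (\<Sum>x\<in>D. k x ^ p)"
    by (simp add: f_exp sum.distrib sum_distrib_left)
  then show ?thesis using N_pos unfolding m_def K_dens_def by (simp add: field_simps)
qed

lemma inner_exp: "(\<integral>g. K_hat R (g \<circ> hh hs) D q \<partial>Mg) = c1 * ((\<Sum>x\<in>D. f hs x) / N - 1 / real R)"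
proof -
  interpret Gp: prob_space Mg by (rule Mg_prob)
  have "(\<integral>g. K_hat R (g \<circ> hh hs) D q \<partial>Mg) = (\<integral>g. c1 * ((\<Sum>x\<in>D. Y hs g x) / N - 1 / real R) \<partial>Mg)"
    by (rule Bochner_Integration.integral_cong) (auto simp: X_eq)
  also have "\<dots> = c1 * ((\<integral>g. (\<Sum>x\<in>D. Y hs g x) / N \<partial>Mg) - 1 / real R)"
    using Gp.prob_space
    by (simp add: Bochner_Integration.integral_diff Bochner_Integration.integrable_sum Y_int Gp.prob_space)
  also have "(\<integral>g. (\<Sum>x\<in>D. Y hs g x) / N \<partial>Mg) = (\<Sum>x\<in>D. f hs x) / N"
    by (simp add: Bochner_Integration.integral_sum Y_int Y_exp f_def)
  finally show ?thesis .
qed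

lemma exp_main: "E_hg Mh Mg (\<lambda>hs g. K_hat R (g \<circ> hh hs) D q) = Kc"
proof -
  interpret Mp: prob_space Mh by (rule Mh_prob)
  have "E_hg Mh Mg (\<lambda>hs g. K_hat R (g \<circ> hh hs) D q) = (\<integral>hs. c1 * ((\<Sum>x\<in>D. f hs x) / N - 1 / real R) \<partial>Mh)"
    unfolding E_hg_def by (simp add: inner_exp)
  also have "\<dots> = c1 * ((\<Sum>x\<in>D. (\<integral>hs. f hs x \<partial>Mh)) / N - 1 / real R)"
    using Mp.prob_space
    by (simp add: Bochner_Integration.integral_diff Bochner_Integration.integrable_sum f_int
        Bochner_Integration.integral_sum Mp.prob_space)
  also have "\<dots> = c1 * (m - 1 / real R)" by (simp add: sum_f_exp)
  also have "\<dots> = Kc" unfolding m_def using c1_prop by (simp add: mult.assoc[symmetric])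
  finally show ?thesis .
qed

definition "psi hs = c1\<^sup>2 * ((\<Sum>x\<in>D. \<Sum>y\<in>D. ff hs x y) / N\<^sup>2 - 2 * m * (\<Sum>x\<in>D. f hs x) / N + m\<^sup>2)"

lemma inner_le: "(\<integral>g. (K_hat R (g \<circ> hh hs) D q - Kc)\<^sup>2 \<partial>Mg) \<le> psi hs"
proof -
  have "(\<Sum>x\<in>D. \<Sum>y\<in>D. (\<integral>g. Y hs g x * Y hs g y \<partial>Mg)) \<le> (\<Sum>x\<in>D. \<Sum>y\<in>D. ff hs x y)"
    by (intro sum_mono) (simp add: ff_def YY_le)
  then have "(\<Sum>x\<in>D. \<Sum>y\<in>D. (\<integral>g. Y hs g x * Y hs g y \<partial>Mg)) / N\<^sup>2 \<le> (\<Sum>x\<in>D. \<Sum>y\<in>D. ff hs x y) / N\<^sup>2"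
    by (rule divide_right_mono) simp
  then show ?thesis unfolding inner_var psi_def
    by (intro mult_left_mono) auto
qed

lemma psi_int: "integrable Mh psi"
proof -
  interpret Mp: prob_space Mh by (rule Mh_prob)
  show ?thesis unfolding psi_def
    by (intro integrable_mult_right Bochner_Integration.integrable_add Bochner_Integration.integrable_diff
        integrable_divide Bochner_Integration.integrable_sum f_int ff_int Mp.integrable_const)
qed

lemma psi_exp: "(\<integral>hs. psi hs \<partial>Mh) \<le> c1\<^sup>2 * (1 / real R + (1 - 1 / real R) * K_tilde (coll_prob H) p D q ^ 2)"
proof -
  interpret Mp: prob_space Mh by (rule Mh_prob)
  have i1: "integrable Mh (\<lambda>hs. (\<Sum>x\<in>D. \<Sum>y\<in>D. ff hs x y) / N\<^sup>2)"
    by (intro integrable_divide Bochner_Integration.integrable_sum ff_int)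
  have i2: "integrable Mh (\<lambda>hs. 2 * m * (\<Sum>x\<in>D. f hs x) / N)"
    by (intro integrable_divide integrable_mult_right Bochner_Integration.integrable_sum f_int)
  have "(\<integral>hs. psi hs \<partial>Mh) = c1\<^sup>2 * ((\<integral>hs. (\<Sum>x\<in>D. \<Sum>y\<in>D. ff hs x y) / N\<^sup>2 \<partial>Mh)
        - (\<integral>hs. 2 * m * (\<Sum>x\<in>D. f hs x) / N \<partial>Mh) + m\<^sup>2)"
    unfolding psi_def using i1 i2 Mp.prob_space
    by (simp add: Bochner_Integration.integral_add Bochner_Integration.integral_diff Mp.prob_space)
  also have "(\<integral>hs. (\<Sum>x\<in>D. \<Sum>y\<in>D. ff hs x y) / N\<^sup>2 \<partial>Mh) = (\<Sum>x\<in>D. \<Sum>y\<in>D. (\<integral>hs. ff hs x y \<partial>Mh)) / N\<^sup>2"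
    by (simp add: Bochner_Integration.integral_sum ff_int Bochner_Integration.integrable_sum)
  also have "(\<integral>hs. 2 * m * (\<Sum>x\<in>D. f hs x) / N \<partial>Mh) = 2 * m * m"
  proof -
    have sfe: "(\<Sum>x\<in>D. (\<integral>hs. f hs x \<partial>Mh)) = m * N" using sum_f_exp N_pos by (simp add: field_simps)
    show ?thesis using N_pos by (simp add: Bochner_Integration.integral_sum f_int sfe)
  qed
  finally have eq: "(\<integral>hs. psi hs \<partial>Mh) = c1\<^sup>2 * ((\<Sum>x\<in>D. \<Sum>y\<in>D. (\<integral>hs. ff hs x y \<partial>Mh)) / N\<^sup>2 - m\<^sup>2)"
    by (simp add: power2_eq_square)
  have "(\<Sum>x\<in>D. \<Sum>y\<in>D. (\<integral>hs. ff hs x y \<partial>Mh)) \<le> (\<Sum>x\<in>D. \<Sum>y\<in>D. 1 / real R + (1 - 1 / real R) * (s x * s y))"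
    by (intro sum_mono ff_exp)
  also have "\<dots> = N * N * (1 / real R) + (1 - 1 / real R) * ((\<Sum>x\<in>D. s x) * (\<Sum>y\<in>D. s y))"
  proof -
    have sp: "(\<Sum>x\<in>D. \<Sum>y\<in>D. s x * s y) = (\<Sum>x\<in>D. s x) * (\<Sum>y\<in>D. s y)"
      by (rule sum_product[symmetric])
    show ?thesis by (simp add: sum.distrib sum_distrib_left[symmetric] sp sum_distrib_right)
  qed
  finally have le: "(\<Sum>x\<in>D. \<Sum>y\<in>D. (\<integral>hs. ff hs x y \<partial>Mh)) / N\<^sup>2 \<le>
      (N * N * (1 / real R) + (1 - 1 / real R) * ((\<Sum>x\<in>D. s x) * (\<Sum>y\<in>D. s y))) / N\<^sup>2"
    by (rule divide_right_mono) simp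
  also have "\<dots> = 1 / real R + (1 - 1 / real R) * K_tilde (coll_prob H) p D q ^ 2"
    using N_pos unfolding K_tilde_def by (simp add: field_simps power2_eq_square)
  finally have le2: "(\<Sum>x\<in>D. \<Sum>y\<in>D. (\<integral>hs. ff hs x y \<partial>Mh)) / N\<^sup>2 - m\<^sup>2 \<le>
      1 / real R + (1 - 1 / real R) * K_tilde (coll_prob H) p D q ^ 2" using zero_le_power2[of m] by linarith
  show ?thesis unfolding eq by (intro mult_left_mono le2) simp
qed

lemma final_ineq:
  "c1\<^sup>2 * (1 / real R + (1 - 1 / real R) * K_tilde (coll_prob H) p D q ^ 2) \<le>
   (real R / (real R - 1))\<^sup>2 * (sqrt ((real R - 1) / real R) * K_tilde (coll_prob H) p D q + 1 / sqrt (real R))\<^sup>2"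
proof -
  let ?K = "K_tilde (coll_prob H) p D q"
  have K0: "0 \<le> ?K" unfolding K_tilde_def by (intro mult_nonneg_nonneg sum_nonneg) auto
  have a: "(sqrt ((real R - 1) / real R))\<^sup>2 = 1 - 1 / real R" using R2 by (simp add: field_simps)
  have b: "(1 / sqrt (real R))\<^sup>2 = 1 / real R" using R2 by (simp add: power_divide)
  have "1 / real R + (1 - 1 / real R) * ?K ^ 2 \<le>
      (sqrt ((real R - 1) / real R) * ?K + 1 / sqrt (real R))\<^sup>2"
    unfolding power2_sum power_mult_distrib a b using K0 R2 by simp
  then show ?thesis unfolding c1_def by (intro mult_left_mono) auto
qed

lemma var_main: "Var_hg Mh Mg (\<lambda>hs g. K_hat R (g \<circ> hh hs) D q) \<le>
   (real R / (real R - 1))\<^sup>2 * (sqrt ((real R - 1) / real R) * K_tilde (coll_prob H) p D q + 1 / sqrt (real R))\<^sup>2"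
proof -
  have "Var_hg Mh Mg (\<lambda>hs g. K_hat R (g \<circ> hh hs) D q) = (\<integral>hs. (\<integral>g. (K_hat R (g \<circ> hh hs) D q - Kc)\<^sup>2 \<partial>Mg) \<partial>Mh)"
    unfolding Var_hg_def exp_main by (simp add: E_hg_def)
  also have "\<dots> \<le> (\<integral>hs. psi hs \<partial>Mh)"
  proof (rule integral_mono'[OF psi_int])
    fix hs show "(\<integral>g. (K_hat R (g \<circ> hh hs) D q - Kc)\<^sup>2 \<partial>Mg) \<le> psi hs" by (rule inner_le)
    have "0 \<le> (\<integral>g. (K_hat R (g \<circ> hh hs) D q - Kc)\<^sup>2 \<partial>Mg)" by simp
    then show "0 \<le> psi hs" using inner_le[of hs] by linarith
  qed
  also note psi_exp
  also note final_ineq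
  finally show ?thesis .
qed

end

theorem mainTheorem2:
  fixes H :: "(real ^ 'd \<Rightarrow> 'u) measure"
    and p R :: nat
    and D :: "(real ^ 'd) set"
    and q :: "real ^ 'd"
  assumes "lsh_family H"
    and "p \<ge> 1" and "R \<ge> 2"
    and "finite D" and "D \<noteq> {}"
  shows "E_hg (concat_draws H p) (rand_fun p R)
           (\<lambda>hs g. K_hat R (g \<circ> concat_hash p hs) D q)
         = K_dens (coll_prob H) p D q
         \<and> Var_hg (concat_draws H p) (rand_fun p R)
           (\<lambda>hs g. K_hat R (g \<circ> concat_hash p hs) D q)
         \<le> (real R / (real R - 1))\<^sup>2 *
           (sqrt ((real R - 1) / real R) * K_tilde (coll_prob H) p D q + 1 / sqrt (real R))\<^sup>2"
proof -
  interpret LS H p R D q using assms by unfold_locales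
  show ?thesis using exp_main var_main by simp
qed

end
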